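(* Every BL-chain $\mathbf A$ can be isomorphically embedded into a saturated BL-chain $\overline{\mathbf A}$ (identify $\mathbf A$ with its image) such that: (1) every element of $\overline{A}\setminus A$ is idempotent; and (2) if $C\subseteq A$ is such that $\bigwedge^{\mathbf A}C$ exists and is idempotent, then $\bigwedge^{\overline{\mathbf A}}C$ exists and $\bigwedge^{\mathbf A}C=\bigwedge^{\overline{\mathbf A}}C$; likewise, if $\bigvee^{\mathbf A}C$ exists and is idempotent, then $\bigvee^{\overline{\mathbf A}}C$ exists and $\bigvee^{\mathbf A}C=\bigvee^{\overline{\mathbf A}}C$.
   Context: A BL-algebra is an algebra $(A,\cdot,\to,\wedge,\vee,0,1)$ such that $(A,\wedge,\vee,0,1)$ is a bounded lattice, $(A,\cdot,1)$ is a commutative monoid, $x\cdot y\le z$ iff $x\le y\to z$, $x\wedge y=x\cdot(x\to y)$ and $(x\to y)\vee(y\to x)=1$; a BL-chain is a totally ordered BL-algebra. An element $a$ is idempotent if $a\cdot a=a$. A pair $(X,Y)$ of subsets of a BL-chain $A$ is a cut if $X\cup Y=A$, $x\le y$ for all $x\in X$, $y\in Y$, $Y$ is closed under $\cdot$, and $x\cdot y=x$ for all $x\in X$, $y\in Y$. A cut $(X,Y)$ is saturated if there is an idempotent $u\in A$ with $x\le u\le y$ for all $x\in X$, $y\in Y$. A BL-chain is saturated if every cut in it is saturated. $\bigwedge^{\mathbf A}C$, $\bigvee^{\mathbf A}C$ denote infimum and supremum computed in $\mathbf A$. *)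

theory Defs
  imports Main
begin

record 'a bl =
  carrier :: "'a set"
  mult :: "'a \<Rightarrow> 'a \<Rightarrow> 'a"
  imp :: "'a \<Rightarrow> 'a \<Rightarrow> 'a"
  meet :: "'a \<Rightarrow> 'a \<Rightarrow> 'a"
  join :: "'a \<Rightarrow> 'a \<Rightarrow> 'a"
  zero :: "'a"
  one :: "'a"

definition bl_le :: "('a, 'b) bl_scheme \<Rightarrow> 'a \<Rightarrow> 'a \<Rightarrow> bool" where
  "bl_le A x y \<longleftrightarrow> meet A x y = x"

definition bl_algebra :: "('a, 'b) bl_scheme \<Rightarrow> bool" where
  "bl_algebra A \<longleftrightarrow>
     zero A \<in> carrier A \<and> one A \<in> carrier A \<and>
     (\<forall>x\<in>carrier A. \<forall>y\<in>carrier A.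
        mult A x y \<in> carrier A \<and> imp A x y \<in> carrier A \<and>
        meet A x y \<in> carrier A \<and> join A x y \<in> carrier A) \<and>
     \<comment> \<open>lattice axioms\<close>
     (\<forall>x\<in>carrier A. \<forall>y\<in>carrier A. \<forall>z\<in>carrier A.
        meet A x (meet A y z) = meet A (meet A x y) z \<and>
        join A x (join A y z) = join A (join A x y) z) \<and>
     (\<forall>x\<in>carrier A. \<forall>y\<in>carrier A.
        meet A x y = meet A y x \<and> join A x y = join A y x \<and>
        meet A x (join A x y) = x \<and> join A x (meet A x y) = x) \<and>
     \<comment> \<open>boundedness\<close>
     (\<forall>x\<in>carrier A. bl_le A (zero A) x \<and> bl_le A x (one A)) \<and>
     \<comment> \<open>commutative monoid\<close>
     (\<forall>x\<in>carrier A. \<forall>y\<in>carrier A. \<forall>z\<in>carrier A.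
        mult A x (mult A y z) = mult A (mult A x y) z) \<and>
     (\<forall>x\<in>carrier A. \<forall>y\<in>carrier A. mult A x y = mult A y x) \<and>
     (\<forall>x\<in>carrier A. mult A x (one A) = x) \<and>
     \<comment> \<open>residuation\<close>
     (\<forall>x\<in>carrier A. \<forall>y\<in>carrier A. \<forall>z\<in>carrier A.
        bl_le A (mult A x y) z \<longleftrightarrow> bl_le A x (imp A y z)) \<and>
     \<comment> \<open>divisibility\<close>
     (\<forall>x\<in>carrier A. \<forall>y\<in>carrier A. meet A x y = mult A x (imp A x y)) \<and>
     \<comment> \<open>prelinearity\<close>
     (\<forall>x\<in>carrier A. \<forall>y\<in>carrier A. join A (imp A x y) (imp A y x) = one A)"

definition bl_chain :: "('a, 'b) bl_scheme \<Rightarrow> bool" where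
  "bl_chain A \<longleftrightarrow> bl_algebra A \<and>
     (\<forall>x\<in>carrier A. \<forall>y\<in>carrier A. bl_le A x y \<or> bl_le A y x)"

definition bl_idempotent :: "('a, 'b) bl_scheme \<Rightarrow> 'a \<Rightarrow> bool" where
  "bl_idempotent A a \<longleftrightarrow> mult A a a = a"

definition bl_cut :: "('a, 'b) bl_scheme \<Rightarrow> 'a set \<Rightarrow> 'a set \<Rightarrow> bool" where
  "bl_cut A X Y \<longleftrightarrow> X \<union> Y = carrier A \<and>
     (\<forall>x\<in>X. \<forall>y\<in>Y. bl_le A x y) \<and>
     (\<forall>y1\<in>Y. \<forall>y2\<in>Y. mult A y1 y2 \<in> Y) \<and>
     (\<forall>x\<in>X. \<forall>y\<in>Y. mult A x y = x)"

definition saturated_cut :: "('a, 'b) bl_scheme \<Rightarrow> 'a set \<Rightarrow> 'a set \<Rightarrow> bool" where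
  "saturated_cut A X Y \<longleftrightarrow>
     (\<exists>u\<in>carrier A. bl_idempotent A u \<and>
        (\<forall>x\<in>X. bl_le A x u) \<and> (\<forall>y\<in>Y. bl_le A u y))"

definition saturated_chain :: "('a, 'b) bl_scheme \<Rightarrow> bool" where
  "saturated_chain A \<longleftrightarrow> bl_chain A \<and>
     (\<forall>X Y. bl_cut A X Y \<longrightarrow> saturated_cut A X Y)"

definition bl_embedding ::
  "('a, 'c) bl_scheme \<Rightarrow> ('b, 'd) bl_scheme \<Rightarrow> ('a \<Rightarrow> 'b) \<Rightarrow> bool" where
  "bl_embedding A B f \<longleftrightarrow>
     f ` carrier A \<subseteq> carrier B \<and> inj_on f (carrier A) \<and>
     f (zero A) = zero B \<and> f (one A) = one B \<and>
     (\<forall>x\<in>carrier A. \<forall>y\<in>carrier A.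
        f (mult A x y) = mult B (f x) (f y) \<and>
        f (imp A x y) = imp B (f x) (f y) \<and>
        f (meet A x y) = meet B (f x) (f y) \<and>
        f (join A x y) = join B (f x) (f y))"

definition is_bl_inf :: "('a, 'b) bl_scheme \<Rightarrow> 'a set \<Rightarrow> 'a \<Rightarrow> bool" where
  "is_bl_inf A C m \<longleftrightarrow> m \<in> carrier A \<and> (\<forall>c\<in>C. bl_le A m c) \<and>
     (\<forall>z\<in>carrier A. (\<forall>c\<in>C. bl_le A z c) \<longrightarrow> bl_le A z m)"

definition is_bl_sup :: "('a, 'b) bl_scheme \<Rightarrow> 'a set \<Rightarrow> 'a \<Rightarrow> bool" where
  "is_bl_sup A C m \<longleftrightarrow> m \<in> carrier A \<and> (\<forall>c\<in>C. bl_le A c m) \<and>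
     (\<forall>z\<in>carrier A. (\<forall>c\<in>C. bl_le A c z) \<longrightarrow> bl_le A m z)"

end

theory Submission
  imports Defs
begin

definition NS :: "'a bl \<Rightarrow> 'a set set" where
  "NS A = {X. X \<subseteq> carrier A \<and> bl_cut A X (carrier A - X) \<and> \<not> saturated_cut A X (carrier A - X)}"

fun lee :: "'a bl \<Rightarrow> ('a + 'a set) \<Rightarrow> ('a + 'a set) \<Rightarrow> bool" where
  "lee A (Inl a) (Inl b) = bl_le A a b"
| "lee A (Inl a) (Inr X) = (a \<in> X)"
| "lee A (Inr X) (Inl b) = (b \<notin> X)"
| "lee A (Inr X) (Inr Z) = (X \<subseteq> Z)"

fun emult :: "'a bl \<Rightarrow> ('a + 'a set) \<Rightarrow> ('a + 'a set) \<Rightarrow> ('a + 'a set)" where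
  "emult A (Inl a) (Inl b) = Inl (mult A a b)"
| "emult A p q = (if lee A p q then p else q)"

fun eimp :: "'a bl \<Rightarrow> ('a + 'a set) \<Rightarrow> ('a + 'a set) \<Rightarrow> ('a + 'a set)" where
  "eimp A (Inl a) (Inl b) = Inl (imp A a b)"
| "eimp A p q = (if lee A p q then Inl (one A) else q)"

definition ext :: "'a bl \<Rightarrow> ('a + 'a set) bl" where
  "ext A = \<lparr>carrier = Inl ` carrier A \<union> Inr ` NS A,
     mult = emult A, imp = eimp A,
     meet = (\<lambda>p q. if lee A p q then p else q),
     join = (\<lambda>p q. if lee A p q then q else p),
     zero = Inl (zero A), one = Inl (one A)\<rparr>"

lemma ext_simps[simp]:
  "carrier (ext A) = Inl ` carrier A \<union> Inr ` NS A"
  "mult (ext A) = emult A" "imp (ext A) = eimp A"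
  "meet (ext A) = (\<lambda>p q. if lee A p q then p else q)"
  "join (ext A) = (\<lambda>p q. if lee A p q then q else p)"
  "zero (ext A) = Inl (zero A)" "one (ext A) = Inl (one A)"
  by (simp_all add: ext_def)

lemma emult_new: "\<not>(\<exists>a b. p = Inl a \<and> q = Inl b) \<Longrightarrow> emult A p q = (if lee A p q then p else q)"
  by (cases p; cases q) auto
lemma eimp_new: "\<not>(\<exists>a b. p = Inl a \<and> q = Inl b) \<Longrightarrow> eimp A p q = (if lee A p q then Inl (one A) else q)"
  by (cases p; cases q) auto

lemma lin_min_assoc:
  assumes tr: "R x y \<Longrightarrow> R y z \<Longrightarrow> R x z" "R x z \<Longrightarrow> R z y \<Longrightarrow> R x y"
     "R y x \<Longrightarrow> R x z \<Longrightarrow> R y z" "R y z \<Longrightarrow> R z x \<Longrightarrow> R y x"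
     "R z x \<Longrightarrow> R x y \<Longrightarrow> R z y" "R z y \<Longrightarrow> R y x \<Longrightarrow> R z x"
   and to: "R x y \<or> R y x" "R y z \<or> R z y" "R x z \<or> R z x"
   and an: "R x y \<Longrightarrow> R y x \<Longrightarrow> x = y" "R y z \<Longrightarrow> R z y \<Longrightarrow> y = z" "R x z \<Longrightarrow> R z x \<Longrightarrow> x = z"
  shows "(if R x (if R y z then y else z) then x else (if R y z then y else z)) =
  (if R (if R x y then x else y) z then (if R x y then x else y) else z)"
    and "(if R x (if R y z then z else y) then (if R y z then z else y) else x) =
  (if R (if R x y then y else x) z then z else (if R x y then y else x))"
  using assms by (auto split: if_splits)

locale blc = fixes A :: "'a bl" assumes ch: "bl_chain A"
begin

abbreviation S where "S \<equiv> carrier A"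
abbreviation lq where "lq x y \<equiv> bl_le A x y"

lemma alg: "bl_algebra A" using ch by (simp add: bl_chain_def)
lemma tot0: "\<forall>x\<in>S. \<forall>y\<in>S. lq x y \<or> lq y x" using ch unfolding bl_chain_def by (rule conjunct2)
lemma tot: "x\<in>S \<Longrightarrow> y\<in>S \<Longrightarrow> lq x y \<or> lq y x" using tot0 by blast
lemmas c1 = alg[unfolded bl_algebra_def, THEN conjunct1]
lemmas c2 = alg[unfolded bl_algebra_def, THEN conjunct2, THEN conjunct1]
lemmas c3 = alg[unfolded bl_algebra_def, THEN conjunct2, THEN conjunct2, THEN conjunct1]
lemmas c4 = alg[unfolded bl_algebra_def, THEN conjunct2, THEN conjunct2, THEN conjunct2, THEN conjunct1]
lemmas c5 = alg[unfolded bl_algebra_def, THEN conjunct2, THEN conjunct2, THEN conjunct2, THEN conjunct2, THEN conjunct1]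
lemmas c6 = alg[unfolded bl_algebra_def, THEN conjunct2, THEN conjunct2, THEN conjunct2, THEN conjunct2, THEN conjunct2, THEN conjunct1]
lemmas c7 = alg[unfolded bl_algebra_def, THEN conjunct2, THEN conjunct2, THEN conjunct2, THEN conjunct2, THEN conjunct2, THEN conjunct2, THEN conjunct1]
lemmas c8 = alg[unfolded bl_algebra_def, THEN conjunct2, THEN conjunct2, THEN conjunct2, THEN conjunct2, THEN conjunct2, THEN conjunct2, THEN conjunct2, THEN conjunct1]
lemmas c9 = alg[unfolded bl_algebra_def, THEN conjunct2, THEN conjunct2, THEN conjunct2, THEN conjunct2, THEN conjunct2, THEN conjunct2, THEN conjunct2, THEN conjunct2, THEN conjunct1]
lemmas c10 = alg[unfolded bl_algebra_def, THEN conjunct2, THEN conjunct2, THEN conjunct2, THEN conjunct2, THEN conjunct2, THEN conjunct2, THEN conjunct2, THEN conjunct2, THEN conjunct2, THEN conjunct1]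
lemmas c11 = alg[unfolded bl_algebra_def, THEN conjunct2, THEN conjunct2, THEN conjunct2, THEN conjunct2, THEN conjunct2, THEN conjunct2, THEN conjunct2, THEN conjunct2, THEN conjunct2, THEN conjunct2, THEN conjunct1]
lemmas c12 = alg[unfolded bl_algebra_def, THEN conjunct2, THEN conjunct2, THEN conjunct2, THEN conjunct2, THEN conjunct2, THEN conjunct2, THEN conjunct2, THEN conjunct2, THEN conjunct2, THEN conjunct2, THEN conjunct2]
lemma zS: "zero A \<in> S" by (rule c1)
lemma oS: "one A \<in> S" by (rule c2)
lemma mS: "x\<in>S \<Longrightarrow> y\<in>S \<Longrightarrow> mult A x y \<in> S" using c3 by blast
lemma iS: "x\<in>S \<Longrightarrow> y\<in>S \<Longrightarrow> imp A x y \<in> S" using c3 by blast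
lemma meS: "x\<in>S \<Longrightarrow> y\<in>S \<Longrightarrow> meet A x y \<in> S" using c3 by blast
lemma jS: "x\<in>S \<Longrightarrow> y\<in>S \<Longrightarrow> join A x y \<in> S" using c3 by blast
lemma meet_assoc: "x\<in>S \<Longrightarrow> y\<in>S \<Longrightarrow> z\<in>S \<Longrightarrow> meet A x (meet A y z) = meet A (meet A x y) z"
  using c4 by blast
lemma meet_comm: "x\<in>S \<Longrightarrow> y\<in>S \<Longrightarrow> meet A x y = meet A y x" using c5 by blast
lemma join_comm: "x\<in>S \<Longrightarrow> y\<in>S \<Longrightarrow> join A x y = join A y x" using c5 by blast
lemma abs1: "x\<in>S \<Longrightarrow> y\<in>S \<Longrightarrow> meet A x (join A x y) = x" using c5 by blast
lemma abs2: "x\<in>S \<Longrightarrow> y\<in>S \<Longrightarrow> join A x (meet A x y) = x" using c5 by blast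
lemma bot: "x\<in>S \<Longrightarrow> lq (zero A) x" using c6 by blast
lemma top: "x\<in>S \<Longrightarrow> lq x (one A)" using c6 by blast
lemma massoc: "x\<in>S \<Longrightarrow> y\<in>S \<Longrightarrow> z\<in>S \<Longrightarrow> mult A x (mult A y z) = mult A (mult A x y) z"
  using c7 by blast
lemma mcomm: "x\<in>S \<Longrightarrow> y\<in>S \<Longrightarrow> mult A x y = mult A y x" using c8 by blast
lemma mone: "x\<in>S \<Longrightarrow> mult A x (one A) = x" using c9 by blast
lemma res: "x\<in>S \<Longrightarrow> y\<in>S \<Longrightarrow> z\<in>S \<Longrightarrow> lq (mult A x y) z \<longleftrightarrow> lq x (imp A y z)"
  using c10 by blast
lemma divi: "x\<in>S \<Longrightarrow> y\<in>S \<Longrightarrow> meet A x y = mult A x (imp A x y)" using c11 by blast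
lemma prel: "x\<in>S \<Longrightarrow> y\<in>S \<Longrightarrow> join A (imp A x y) (imp A y x) = one A" using c12 by blast

lemma refl: "x\<in>S \<Longrightarrow> lq x x"
proof -
  assume x: "x\<in>S"
  have "join A x (meet A x x) = x" using abs2 x by blast
  moreover have "meet A x (join A x (meet A x x)) = x" using abs1 x meS by blast
  ultimately show ?thesis by (simp add: bl_le_def)
qed

lemma antisym: "x\<in>S \<Longrightarrow> y\<in>S \<Longrightarrow> lq x y \<Longrightarrow> lq y x \<Longrightarrow> x = y"
  unfolding bl_le_def using meet_comm by metis

lemma trans: "x\<in>S \<Longrightarrow> y\<in>S \<Longrightarrow> z\<in>S \<Longrightarrow> lq x y \<Longrightarrow> lq y z \<Longrightarrow> lq x z"
  unfolding bl_le_def using meet_assoc by metis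

lemma meet_le: "x\<in>S \<Longrightarrow> y\<in>S \<Longrightarrow> lq x y \<Longrightarrow> meet A x y = x" by (simp add: bl_le_def)
lemma meet_nle: "x\<in>S \<Longrightarrow> y\<in>S \<Longrightarrow> \<not> lq x y \<Longrightarrow> meet A x y = y"
  using tot meet_comm unfolding bl_le_def by metis
lemma join_le: "x\<in>S \<Longrightarrow> y\<in>S \<Longrightarrow> lq x y \<Longrightarrow> join A x y = y"
  using abs2 meet_comm join_comm unfolding bl_le_def by metis
lemma join_nle: "x\<in>S \<Longrightarrow> y\<in>S \<Longrightarrow> \<not> lq x y \<Longrightarrow> join A x y = x"
  using abs2 meet_nle by metis

lemma mono: "x\<in>S \<Longrightarrow> y\<in>S \<Longrightarrow> z\<in>S \<Longrightarrow> lq x y \<Longrightarrow> lq (mult A x z) (mult A y z)"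
proof -
  assume a: "x\<in>S" "y\<in>S" "z\<in>S" "lq x y"
  have m: "mult A y z \<in> S" using mS a by blast
  have m2: "mult A x z \<in> S" using mS a by blast
  have i: "imp A z (mult A y z) \<in> S" using iS a m by blast
  have "lq (mult A y z) (mult A y z)" using refl m by blast
  hence "lq y (imp A z (mult A y z))" using res[of y z "mult A y z"] a m by simp
  hence "lq x (imp A z (mult A y z))" using trans[of x y "imp A z (mult A y z)"] a i by simp
  thus ?thesis using res[of x z "mult A y z"] a m by simp
qed

lemma mle: "x\<in>S \<Longrightarrow> y\<in>S \<Longrightarrow> lq (mult A x y) x"
  using mono[of y "one A" x] top oS mone mcomm by metis
lemma mle2: "x\<in>S \<Longrightarrow> y\<in>S \<Longrightarrow> lq (mult A x y) y"
  using mle mcomm by metis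

lemma le_imp: "y\<in>S \<Longrightarrow> z\<in>S \<Longrightarrow> lq z (imp A y z)"
  using mle res by blast

lemma imp_one: "x\<in>S \<Longrightarrow> y\<in>S \<Longrightarrow> lq x y \<Longrightarrow> imp A x y = one A"
proof -
  assume a: "x\<in>S" "y\<in>S" "lq x y"
  have "mult A (one A) x = x" using mone mcomm oS a by metis
  hence "lq (one A) (imp A x y)" using res[of "one A" x y] a oS by simp
  thus ?thesis using antisym top oS iS a by blast
qed

lemma div_eq: "y\<in>S \<Longrightarrow> z\<in>S \<Longrightarrow> \<not> lq y z \<Longrightarrow> mult A y (imp A y z) = z"
  using divi meet_nle by metis

lemma zidem: "mult A (zero A) (zero A) = zero A"
  using antisym mle bot zS mS by metis

lemma oidem: "mult A (one A) (one A) = one A" using mone oS by blast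


lemma ns_sub: "X \<in> NS A \<Longrightarrow> X \<subseteq> S" by (simp add: NS_def)
lemma ns_le: "X \<in> NS A \<Longrightarrow> a \<in> X \<Longrightarrow> b \<in> S \<Longrightarrow> b \<notin> X \<Longrightarrow> lq a b"
  unfolding NS_def bl_cut_def by blast
lemma ns_mY: "X \<in> NS A \<Longrightarrow> a \<in> S \<Longrightarrow> a \<notin> X \<Longrightarrow> b \<in> S \<Longrightarrow> b \<notin> X \<Longrightarrow> mult A a b \<notin> X"
  unfolding NS_def bl_cut_def by blast
lemma ns_mXY: "X \<in> NS A \<Longrightarrow> a \<in> X \<Longrightarrow> b \<in> S \<Longrightarrow> b \<notin> X \<Longrightarrow> mult A a b = a"
  unfolding NS_def bl_cut_def by blast
lemma ns_nsat: "X \<in> NS A \<Longrightarrow> \<not> saturated_cut A X (S - X)" by (simp add: NS_def)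

lemma ns_down: "X \<in> NS A \<Longrightarrow> a \<in> X \<Longrightarrow> b \<in> S \<Longrightarrow> lq b a \<Longrightarrow> b \<in> X"
  using ns_le antisym ns_sub by blast
lemma ns_up: "X \<in> NS A \<Longrightarrow> a \<in> S \<Longrightarrow> a \<notin> X \<Longrightarrow> b \<in> S \<Longrightarrow> lq a b \<Longrightarrow> b \<notin> X"
  using ns_down by blast

lemma ns_0: "X \<in> NS A \<Longrightarrow> zero A \<in> X"
proof (rule ccontr)
  assume X: "X \<in> NS A" and n: "zero A \<notin> X"
  have "saturated_cut A X (S - X)" unfolding saturated_cut_def bl_idempotent_def
    using zS zidem bot ns_le[OF X _ zS n] by blast
  thus False using ns_nsat X by blast
qed

lemma ns_1: "X \<in> NS A \<Longrightarrow> one A \<notin> X"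
proof
  assume X: "X \<in> NS A" and n: "one A \<in> X"
  have "saturated_cut A X (S - X)" unfolding saturated_cut_def bl_idempotent_def
    using oS oidem top ns_sub[OF X] ns_le[OF X n] by blast
  thus False using ns_nsat X by blast
qed

abbreviation CB where "CB \<equiv> Inl ` S \<union> Inr ` NS A"

lemma CB_cases: "p \<in> CB \<Longrightarrow> (\<And>a. p = Inl a \<Longrightarrow> a \<in> S \<Longrightarrow> P) \<Longrightarrow> (\<And>X. p = Inr X \<Longrightarrow> X \<in> NS A \<Longrightarrow> P) \<Longrightarrow> P"
  by blast

lemma Inl_img[simp]: "Inl a \<in> Inl ` B \<longleftrightarrow> a \<in> B" "Inl a \<notin> Inr ` C" "Inr X \<in> Inr ` C \<longleftrightarrow> X \<in> C" "Inr X \<notin> Inl ` B"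
  by auto

lemma Inl_CB[simp]: "Inl a \<in> CB \<longleftrightarrow> a \<in> S" by auto
lemma Inr_CB[simp]: "Inr X \<in> CB \<longleftrightarrow> X \<in> NS A" by auto

lemma lee_refl: "p \<in> CB \<Longrightarrow> lee A p p"
  by (erule CB_cases) (auto simp: refl)

lemma lee_antisym: "p \<in> CB \<Longrightarrow> q \<in> CB \<Longrightarrow> lee A p q \<Longrightarrow> lee A q p \<Longrightarrow> p = q"
  by (erule CB_cases; erule CB_cases) (auto simp: antisym)

lemma lee_total: "p \<in> CB \<Longrightarrow> q \<in> CB \<Longrightarrow> lee A p q \<or> lee A q p"
proof (erule CB_cases; erule CB_cases)
  fix X Z assume "p = Inr X" "X \<in> NS A" "q = Inr Z" "Z \<in> NS A"
  moreover have "X \<subseteq> Z \<or> Z \<subseteq> X"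
  proof (rule ccontr)
    assume "\<not> (X \<subseteq> Z \<or> Z \<subseteq> X)"
    then obtain a b where ab: "a \<in> X" "a \<notin> Z" "b \<in> Z" "b \<notin> X" by blast
    have aS: "a \<in> S" and bS: "b \<in> S" using ab ns_sub \<open>X \<in> NS A\<close> \<open>Z \<in> NS A\<close> by blast+
    have "lq a b" using ns_le[OF \<open>X \<in> NS A\<close> ab(1) bS ab(4)] .
    moreover have "lq b a" using ns_le[OF \<open>Z \<in> NS A\<close> ab(3) aS ab(2)] .
    ultimately show False using antisym aS bS ab by blast
  qed
  ultimately show ?thesis by auto
qed (auto simp: tot)


lemma lee_trans_aux: "X \<in> NS A \<Longrightarrow> b \<in> S \<Longrightarrow> Z \<in> NS A \<Longrightarrow> b \<notin> X \<Longrightarrow> b \<in> Z \<Longrightarrow> X \<subseteq> Z"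
proof
  fix x assume h: "X \<in> NS A" "b \<in> S" "Z \<in> NS A" "b \<notin> X" "b \<in> Z" and x: "x \<in> X"
  have xS: "x \<in> S" using ns_sub h(1) x by blast
  have "lq x b" using ns_le[OF h(1) x h(2) h(4)] .
  thus "x \<in> Z" using ns_down[OF h(3) h(5) xS] by simp
qed

lemma lee_trans: "p \<in> CB \<Longrightarrow> q \<in> CB \<Longrightarrow> r \<in> CB \<Longrightarrow> lee A p q \<Longrightarrow> lee A q r \<Longrightarrow> lee A p r"
  apply (cases p; cases q; cases r)
  subgoal for a b c using trans[of a b c] by simp
  subgoal for a b Z using ns_down[of Z b a] by simp
  subgoal for a Y c using ns_le[of Y a c] by simp
  subgoal for a Y Z by auto
  subgoal for X b c using ns_up[of X b c] by simp
  subgoal for X b Z using lee_trans_aux[of X b Z] by simp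
  subgoal for X Y c by auto
  subgoal for X Y Z by auto
  done

lemma lee_top: "p \<in> CB \<Longrightarrow> lee A p (Inl (one A))"
  by (cases p) (auto simp: top ns_1)
lemma lee_bot: "p \<in> CB \<Longrightarrow> lee A (Inl (zero A)) p"
  by (cases p) (auto simp: bot ns_0)

lemma emult_CB: "p \<in> CB \<Longrightarrow> q \<in> CB \<Longrightarrow> emult A p q \<in> CB"
  by (cases p; cases q) (auto simp: mS)
lemma eimp_CB: "p \<in> CB \<Longrightarrow> q \<in> CB \<Longrightarrow> eimp A p q \<in> CB"
  by (cases p; cases q) (auto simp: iS oS)

lemma min_comm: "p \<in> CB \<Longrightarrow> q \<in> CB \<Longrightarrow> (if lee A p q then p else q) = (if lee A q p then q else p)"
  using lee_antisym[of p q] lee_total[of p q] by auto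

lemma emult_comm: "p \<in> CB \<Longrightarrow> q \<in> CB \<Longrightarrow> emult A p q = emult A q p"
proof (cases "\<exists>a b. p = Inl a \<and> q = Inl b")
  case True
  then obtain a b where "p = Inl a" "q = Inl b" by blast
  moreover assume "p \<in> CB" "q \<in> CB"
  ultimately show ?thesis by (simp add: mcomm)
next
  case False
  assume "p \<in> CB" "q \<in> CB"
  moreover have "\<not>(\<exists>a b. q = Inl a \<and> p = Inl b)" using False by blast
  ultimately show ?thesis using False emult_new[of p q A] emult_new[of q p A] min_comm by simp
qed

lemma emult_le: "p \<in> CB \<Longrightarrow> q \<in> CB \<Longrightarrow> lee A (emult A p q) p"
  using lee_total[of p q] lee_refl[of p] by (cases p; cases q) (auto simp: mle)

lemma emult_le2: "p \<in> CB \<Longrightarrow> q \<in> CB \<Longrightarrow> lee A (emult A p q) q"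
  using emult_le emult_comm by metis

lemma emult_one: "p \<in> CB \<Longrightarrow> emult A p (Inl (one A)) = p"
  by (cases p) (auto simp: mone ns_1)

lemma keyL: "X \<in> NS A \<Longrightarrow> q \<in> CB \<Longrightarrow> r \<in> CB \<Longrightarrow> lee A r (Inr X) \<Longrightarrow> \<not> lee A q (Inr X) \<Longrightarrow> emult A q r = r"
proof (cases "\<exists>a b. q = Inl a \<and> r = Inl b")
  case True
  assume h: "X \<in> NS A" "q \<in> CB" "r \<in> CB" "lee A r (Inr X)" "\<not> lee A q (Inr X)"
  then obtain a b where ab: "q = Inl a" "r = Inl b" using True by blast
  have "mult A b a = b" using ns_mXY[of X b a] h ab by simp
  thus ?thesis using ab h mcomm by simp
next
  case False
  assume h: "X \<in> NS A" "q \<in> CB" "r \<in> CB" "lee A r (Inr X)" "\<not> lee A q (Inr X)"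
  have "lee A (Inr X) q" using lee_total[of q "Inr X"] h by simp
  hence "lee A r q" using lee_trans[of r "Inr X" q] h by simp
  thus ?thesis using emult_new[OF False] lee_antisym[of q r] h by auto
qed

lemma keyL2: "X \<in> NS A \<Longrightarrow> q \<in> CB \<Longrightarrow> r \<in> CB \<Longrightarrow> \<not> lee A q (Inr X) \<Longrightarrow> \<not> lee A r (Inr X) \<Longrightarrow> \<not> lee A (emult A q r) (Inr X)"
proof (cases "\<exists>a b. q = Inl a \<and> r = Inl b")
  case True
  assume h: "X \<in> NS A" "q \<in> CB" "r \<in> CB" "\<not> lee A q (Inr X)" "\<not> lee A r (Inr X)"
  then obtain a b where ab: "q = Inl a" "r = Inl b" using True by blast
  thus ?thesis using ns_mY[of X a b] h by simp
next
  case False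
  assume h: "X \<in> NS A" "q \<in> CB" "r \<in> CB" "\<not> lee A q (Inr X)" "\<not> lee A r (Inr X)"
  thus ?thesis using emult_new[OF False] by simp
qed

lemma assoc1: "X \<in> NS A \<Longrightarrow> q \<in> CB \<Longrightarrow> r \<in> CB \<Longrightarrow>
   emult A (emult A (Inr X) q) r = emult A (Inr X) (emult A q r)"
proof -
  assume h: "X \<in> NS A" "q \<in> CB" "r \<in> CB"
  let ?u = "Inr X"
  have uC: "?u \<in> CB" using h by simp
  have qr: "emult A q r \<in> CB" using emult_CB h by blast
  have eu: "\<And>x. emult A ?u x = (if lee A ?u x then ?u else x)" by (case_tac x) auto
  show ?thesis
  proof (cases "lee A q ?u")
    case True
    have "emult A ?u q = q" using eu[of q] lee_antisym[of ?u q] True h by auto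
    moreover have "lee A (emult A q r) ?u" using emult_le[of q r] lee_trans[of _ q ?u] True h qr uC by blast
    ultimately show ?thesis using eu[of "emult A q r"] lee_antisym[of ?u "emult A q r"] uC qr by auto
  next
    case False
    hence uq: "emult A ?u q = ?u" using eu[of q] lee_total[of q ?u] h by auto
    show ?thesis
    proof (cases "lee A r ?u")
      case True
      thus ?thesis using uq keyL[of X q r] h False by simp
    next
      case F2: False
      have "\<not> lee A (emult A q r) ?u" using keyL2[of X q r] h False F2 by simp
      hence "lee A ?u (emult A q r)" using lee_total qr uC by blast
      moreover have "lee A ?u r" using lee_total h uC F2 by blast
      ultimately show ?thesis using uq eu by simp
    qed
  qed
qed

lemma emult_assoc: "p \<in> CB \<Longrightarrow> q \<in> CB \<Longrightarrow> r \<in> CB \<Longrightarrow>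
   emult A p (emult A q r) = emult A (emult A p q) r"
proof -
  assume h: "p \<in> CB" "q \<in> CB" "r \<in> CB"
  note C = emult_CB emult_comm
  show ?thesis
  proof (cases p)
    case (Inr X)
    thus ?thesis using assoc1[of X q r] h by simp
  next
    case (Inl a)
    show ?thesis
    proof (cases q)
      case (Inr Y)
      have Y: "Y \<in> NS A" using Inr h by simp
      have "emult A (emult A p q) r = emult A (emult A q p) r" using emult_comm h by simp
      also have "\<dots> = emult A q (emult A p r)" using assoc1[of Y p r] Inr Y h by simp
      also have "\<dots> = emult A q (emult A r p)" using emult_comm h by simp
      also have "\<dots> = emult A (emult A q r) p" using assoc1[of Y r p] Inr Y h by simp
      also have "\<dots> = emult A p (emult A q r)" using emult_comm h emult_CB by simp
      finally show ?thesis by simp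
    next
      case (Inl b)
      show ?thesis
      proof (cases r)
        case (Inr Z)
        have Z: "Z \<in> NS A" using Inr h by simp
        have "emult A p (emult A q r) = emult A p (emult A r q)" using emult_comm h by simp
        also have "\<dots> = emult A (emult A r q) p" using emult_comm h emult_CB by simp
        also have "\<dots> = emult A r (emult A q p)" using assoc1[of Z q p] Inr Z h by simp
        also have "\<dots> = emult A r (emult A p q)" using emult_comm h by simp
        also have "\<dots> = emult A (emult A p q) r" using emult_comm h emult_CB by simp
        finally show ?thesis .
      next
        case (Inl c)
        thus ?thesis using \<open>p = Inl a\<close> \<open>q = Inl b\<close> h by (simp add: massoc)
      qed
    qed
  qed
qed


lemma res_special: "U \<in> NS A \<Longrightarrow> b \<in> S \<Longrightarrow> c \<in> S \<Longrightarrow>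
   lee A (emult A (Inr U) (Inl b)) (Inl c) \<longleftrightarrow> lee A (Inr U) (eimp A (Inl b) (Inl c))"
proof -
  assume h: "U \<in> NS A" "b \<in> S" "c \<in> S"
  have ic: "imp A b c \<in> S" using iS h by blast
  show ?thesis
  proof (cases "lq b c")
    case True
    hence "imp A b c = one A" using imp_one h by blast
    moreover have "b \<notin> U \<Longrightarrow> c \<notin> U" using ns_up[of U b c] h True by blast
    ultimately show ?thesis using ns_1[of U] h True by auto
  next
    case False
    show ?thesis
    proof (cases "b \<in> U")
      case True
      have "imp A b c \<in> U"
      proof (rule ccontr)
        assume "imp A b c \<notin> U"
        hence "mult A b (imp A b c) = b" using ns_mXY[of U b "imp A b c"] h True ic by blast
        hence "c = b" using div_eq[of b c] h False by simp
        thus False using False refl h by blast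
      qed
      thus ?thesis using True False by simp
    next
      case bU: False
      have "c \<notin> U \<longleftrightarrow> imp A b c \<notin> U"
      proof
        assume "c \<notin> U" thus "imp A b c \<notin> U" using ns_up[of U c "imp A b c"] le_imp h ic by blast
      next
        assume "imp A b c \<notin> U"
        hence "mult A b (imp A b c) \<notin> U" using ns_mY[of U b "imp A b c"] h bU ic by blast
        thus "c \<notin> U" using div_eq[of b c] h False by simp
      qed
      thus ?thesis using bU by simp
    qed
  qed
qed

lemma eres: "x \<in> CB \<Longrightarrow> y \<in> CB \<Longrightarrow> z \<in> CB \<Longrightarrow>
   lee A (emult A x y) z \<longleftrightarrow> lee A x (eimp A y z)"
proof -
  assume h: "x \<in> CB" "y \<in> CB" "z \<in> CB"
  have xy: "emult A x y \<in> CB" using emult_CB h by blast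
  show ?thesis
  proof (cases "\<exists>b c. y = Inl b \<and> z = Inl c")
    case True
    then obtain b c where bc: "y = Inl b" "z = Inl c" by blast
    show ?thesis
    proof (cases x)
      case (Inl a)
      thus ?thesis using bc h res[of a b c] by simp
    next
      case (Inr U)
      thus ?thesis using bc h res_special[of U b c] by simp
    qed
  next
    case False
    hence ei: "eimp A y z = (if lee A y z then Inl (one A) else z)" using eimp_new by blast
    show ?thesis
    proof (cases "lee A y z")
      case True
      thus ?thesis using ei lee_top h lee_trans[OF xy _ _ emult_le2] by auto
    next
      case yz: False
      have "lee A (emult A x y) z \<longleftrightarrow> lee A x z"
      proof
        assume a: "lee A (emult A x y) z"
        show "lee A x z"
        proof (rule ccontr)
          assume xz: "\<not> lee A x z"
          show False
          proof (cases z)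
            case (Inr Z)
            thus False using keyL2[of Z x y] h xz yz a by simp
          next
            case (Inl c)
            then obtain Y where "y = Inr Y" using False by (cases y) auto
            hence "emult A x y = (if lee A x y then x else y)" by (cases x) auto
            thus False using a xz yz by (auto split: if_splits)
          qed
        qed
      next
        assume "lee A x z" thus "lee A (emult A x y) z" using lee_trans[OF xy _ _ emult_le] h by blast
      qed
      thus ?thesis using ei yz by simp
    qed
  qed
qed

lemma ediv: "x \<in> CB \<Longrightarrow> y \<in> CB \<Longrightarrow> (if lee A x y then x else y) = emult A x (eimp A x y)"
proof (cases "\<exists>a b. x = Inl a \<and> y = Inl b")
  case True
  assume h: "x \<in> CB" "y \<in> CB"
  then obtain a b where ab: "x = Inl a" "y = Inl b" using True by blast
  thus ?thesis using h divi[of a b] meet_le[of a b] meet_nle[of a b] by auto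
next
  case False
  assume h: "x \<in> CB" "y \<in> CB"
  have ei: "eimp A x y = (if lee A x y then Inl (one A) else y)" using eimp_new False by blast
  show ?thesis
  proof (cases "lee A x y")
    case True thus ?thesis using ei emult_one h by simp
  next
    case F: False thus ?thesis using ei emult_new[OF False] by simp
  qed
qed

lemma join_Inl: "a \<in> S \<Longrightarrow> b \<in> S \<Longrightarrow> (if lee A (Inl a) (Inl b) then Inl b else Inl a) = Inl (join A a b)"
  using join_le join_nle by auto
lemma meet_Inl: "a \<in> S \<Longrightarrow> b \<in> S \<Longrightarrow> (if lee A (Inl a) (Inl b) then Inl a else Inl b) = Inl (meet A a b)"
  using meet_le meet_nle by auto

lemma eprel: "x \<in> CB \<Longrightarrow> y \<in> CB \<Longrightarrow>
  (if lee A (eimp A x y) (eimp A y x) then eimp A y x else eimp A x y) = Inl (one A)"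
proof (cases "\<exists>a b. x = Inl a \<and> y = Inl b")
  case True
  assume h: "x \<in> CB" "y \<in> CB"
  then obtain a b where ab: "x = Inl a" "y = Inl b" using True by blast
  thus ?thesis using h join_Inl[of "imp A a b" "imp A b a"] prel[of a b] iS by (auto split: if_splits)
next
  case False
  assume h: "x \<in> CB" "y \<in> CB"
  have ei: "eimp A x y = (if lee A x y then Inl (one A) else y)" using eimp_new False by blast
  have ei2: "eimp A y x = (if lee A y x then Inl (one A) else x)" using eimp_new False by blast
  have t: "lee A (Inl (one A)) w \<Longrightarrow> w \<in> CB \<Longrightarrow> w = Inl (one A)" for w
    using lee_antisym lee_top oS by (metis Inl_CB)
  show ?thesis
  proof (cases "lee A x y")
    case True
    thus ?thesis using ei t eimp_CB h by auto
  next
    case F: False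
    hence "lee A y x" using lee_total h by blast
    thus ?thesis using ei2 lee_top eimp_CB h by auto
  qed
qed


lemma ble: "p \<in> CB \<Longrightarrow> q \<in> CB \<Longrightarrow> bl_le (ext A) p q \<longleftrightarrow> lee A p q"
  unfolding bl_le_def using lee_refl by auto

lemma min_assoc: "x \<in> CB \<Longrightarrow> y \<in> CB \<Longrightarrow> z \<in> CB \<Longrightarrow>
  (if lee A x (if lee A y z then y else z) then x else (if lee A y z then y else z)) =
  (if lee A (if lee A x y then x else y) z then (if lee A x y then x else y) else z)"
  by (rule lin_min_assoc(1)[of "lee A" x y z]; metis lee_trans lee_total lee_antisym)

lemma max_assoc: "x \<in> CB \<Longrightarrow> y \<in> CB \<Longrightarrow> z \<in> CB \<Longrightarrow>
  (if lee A x (if lee A y z then z else y) then (if lee A y z then z else y) else x) =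
  (if lee A (if lee A x y then y else x) z then z else (if lee A x y then y else x))"
  by (rule lin_min_assoc(2)[of "lee A" x y z]; metis lee_trans lee_total lee_antisym)

lemma max_comm: "p \<in> CB \<Longrightarrow> q \<in> CB \<Longrightarrow> (if lee A p q then q else p) = (if lee A q p then p else q)"
  using lee_antisym[of p q] lee_total[of p q] by auto

lemma ext_alg: "bl_algebra (ext A)"
proof -
  let ?B = "ext A"
  have f1: "zero ?B \<in> carrier ?B" using zS by simp
  have f2: "one ?B \<in> carrier ?B" using oS by simp
  have f3: "\<forall>x\<in>carrier ?B. \<forall>y\<in>carrier ?B.
        mult ?B x y \<in> carrier ?B \<and> imp ?B x y \<in> carrier ?B \<and>
        meet ?B x y \<in> carrier ?B \<and> join ?B x y \<in> carrier ?B"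
    using emult_CB eimp_CB by simp
  have f4: "\<forall>x\<in>carrier ?B. \<forall>y\<in>carrier ?B. \<forall>z\<in>carrier ?B.
        meet ?B x (meet ?B y z) = meet ?B (meet ?B x y) z \<and>
        join ?B x (join ?B y z) = join ?B (join ?B x y) z"
  proof (intro ballI conjI)
    fix x y z assume h: "x \<in> carrier ?B" "y \<in> carrier ?B" "z \<in> carrier ?B"
    have h': "x \<in> CB" "y \<in> CB" "z \<in> CB" using h by simp_all
    show "meet ?B x (meet ?B y z) = meet ?B (meet ?B x y) z" using min_assoc[OF h'] by simp
    show "join ?B x (join ?B y z) = join ?B (join ?B x y) z" using max_assoc[OF h'] by simp
  qed
  have f5: "\<forall>x\<in>carrier ?B. \<forall>y\<in>carrier ?B.
        meet ?B x y = meet ?B y x \<and> join ?B x y = join ?B y x \<and>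
        meet ?B x (join ?B x y) = x \<and> join ?B x (meet ?B x y) = x"
  proof (intro ballI conjI)
    fix x y assume h: "x \<in> carrier ?B" "y \<in> carrier ?B"
    show "meet ?B x y = meet ?B y x" using min_comm h by simp
    show "join ?B x y = join ?B y x" using max_comm h by simp
    show "meet ?B x (join ?B x y) = x" using lee_refl h by simp
    show "join ?B x (meet ?B x y) = x" using lee_refl h by simp
  qed
  have f6: "\<forall>x\<in>carrier ?B. bl_le ?B (zero ?B) x \<and> bl_le ?B x (one ?B)"
    using ble lee_top lee_bot zS oS by simp
  have f7: "\<forall>x\<in>carrier ?B. \<forall>y\<in>carrier ?B. \<forall>z\<in>carrier ?B.
        mult ?B x (mult ?B y z) = mult ?B (mult ?B x y) z"
    using emult_assoc by simp
  have f8: "\<forall>x\<in>carrier ?B. \<forall>y\<in>carrier ?B. mult ?B x y = mult ?B y x"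
    using emult_comm by simp
  have f9: "\<forall>x\<in>carrier ?B. mult ?B x (one ?B) = x" using emult_one by simp
  have f10: "\<forall>x\<in>carrier ?B. \<forall>y\<in>carrier ?B. \<forall>z\<in>carrier ?B.
        bl_le ?B (mult ?B x y) z \<longleftrightarrow> bl_le ?B x (imp ?B y z)"
  proof (intro ballI)
    fix x y z assume h: "x \<in> carrier ?B" "y \<in> carrier ?B" "z \<in> carrier ?B"
    have c: "emult A x y \<in> CB" "eimp A y z \<in> CB" using h emult_CB eimp_CB by simp_all
    show "bl_le ?B (mult ?B x y) z \<longleftrightarrow> bl_le ?B x (imp ?B y z)"
      using ble[OF c(1)] ble[OF _ c(2)] eres[of x y z] h by simp
  qed
  have f11: "\<forall>x\<in>carrier ?B. \<forall>y\<in>carrier ?B. meet ?B x y = mult ?B x (imp ?B x y)"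
    using ediv by simp
  have f12: "\<forall>x\<in>carrier ?B. \<forall>y\<in>carrier ?B. join ?B (imp ?B x y) (imp ?B y x) = one ?B"
    using eprel by simp
  show ?thesis unfolding bl_algebra_def
    apply (insert f1 f2 f3 f4 f5 f6 f7 f8 f9 f10 f11 f12)
    apply (intro conjI)
    by assumption+
qed

lemma ext_chain: "bl_chain (ext A)"
  unfolding bl_chain_def using ext_alg ble lee_total by simp


lemma sat_core:
  assumes U: "X' \<union> Y' = CB"
    and O: "\<And>x y. x \<in> X' \<Longrightarrow> y \<in> Y' \<Longrightarrow> lee A x y"
    and M: "\<And>y1 y2. y1 \<in> Y' \<Longrightarrow> y2 \<in> Y' \<Longrightarrow> emult A y1 y2 \<in> Y'"
    and P: "\<And>x y. x \<in> X' \<Longrightarrow> y \<in> Y' \<Longrightarrow> emult A x y = x"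
  shows "\<exists>u\<in>CB. emult A u u = u \<and> (\<forall>x\<in>X'. lee A x u) \<and> (\<forall>y\<in>Y'. lee A u y)"
proof (cases "X' \<inter> Y' = {}")
  case False
  then obtain p where p: "p \<in> X'" "p \<in> Y'" by blast
  have "p \<in> CB" using U p by blast
  moreover have "emult A p p = p" using P p by blast
  ultimately show ?thesis using O p by blast
next
  case disj: True
  define X where "X = {a \<in> S. Inl a \<in> X'}"
  have XS: "X \<subseteq> S" unfolding X_def by blast
  have inY: "a \<in> S \<Longrightarrow> a \<notin> X \<Longrightarrow> Inl a \<in> Y'" for a using U unfolding X_def by blast
  have inX: "a \<in> X \<Longrightarrow> Inl a \<in> X'" for a unfolding X_def by blast
  have notX: "Inl a \<in> Y' \<Longrightarrow> a \<notin> X" for a using disj inX by blast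
  have cut: "bl_cut A X (S - X)"
    unfolding bl_cut_def
  proof (intro conjI ballI)
    show "X \<union> (S - X) = S" using XS by blast
  next
    fix x y assume "x \<in> X" "y \<in> S - X"
    thus "lq x y" using O[of "Inl x" "Inl y"] inX inY by simp
  next
    fix y1 y2 assume h: "y1 \<in> S - X" "y2 \<in> S - X"
    hence "emult A (Inl y1) (Inl y2) \<in> Y'" using M inY by blast
    thus "mult A y1 y2 \<in> S - X" using notX mS h by simp
  next
    fix x y assume "x \<in> X" "y \<in> S - X"
    thus "mult A x y = x" using P[of "Inl x" "Inl y"] inX inY by simp
  qed
  show ?thesis
  proof (cases "saturated_cut A X (S - X)")
    case True
    then obtain e where e: "e \<in> S" "mult A e e = e" "\<forall>x\<in>X. lq x e" "\<forall>y\<in>S - X. lq e y"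
      unfolding saturated_cut_def bl_idempotent_def by blast
    have l1: "lee A x (Inl e)" if x: "x \<in> X'" for x
    proof (cases "Inl e \<in> Y'")
      case True thus ?thesis using O x by blast
    next
      case False
      hence eX: "e \<in> X" using inY e by blast
      show ?thesis
      proof (cases x)
        case (Inl a)
        hence "a \<in> X" using x U unfolding X_def by blast
        thus ?thesis using Inl e by simp
      next
        case (Inr Z)
        have Z: "Z \<in> NS A" using x U Inr by blast
        have "e \<notin> Z"
        proof
          assume eZ: "e \<in> Z"
          have "saturated_cut A Z (S - Z)" unfolding saturated_cut_def bl_idempotent_def
          proof (intro bexI[of _ e] conjI ballI)
            fix z assume z: "z \<in> Z"
            have zS: "z \<in> S" using ns_sub Z z by blast
            show "lq z e"
            proof (rule ccontr)
              assume "\<not> lq z e"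
              hence "z \<notin> X" using e by blast
              hence "Inl z \<in> Y'" using inY zS by blast
              hence "lee A (Inr Z) (Inl z)" using O x Inr by blast
              thus False using z by simp
            qed
          next
            fix y assume "y \<in> S - Z" thus "lq e y" using ns_le[OF Z eZ] by blast
          qed (use e in auto)
          thus False using ns_nsat Z by blast
        qed
        thus ?thesis using Inr by simp
      qed
    qed
    have l2: "lee A (Inl e) y" if y: "y \<in> Y'" for y
    proof (cases "Inl e \<in> X'")
      case True thus ?thesis using O y by blast
    next
      case False
      hence eX: "e \<notin> X" unfolding X_def by blast
      show ?thesis
      proof (cases y)
        case (Inl b)
        hence "b \<in> S - X" using y U notX by blast
        thus ?thesis using Inl e by simp
      next
        case (Inr Z)
        have Z: "Z \<in> NS A" using y U Inr by blast
        have "e \<in> Z"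
        proof (rule ccontr)
          assume eZ: "e \<notin> Z"
          have "saturated_cut A Z (S - Z)" unfolding saturated_cut_def bl_idempotent_def
          proof (intro bexI[of _ e] conjI ballI)
            fix z assume z: "z \<in> Z" thus "lq z e" using ns_le[OF Z z] e eZ by blast
          next
            fix w assume w: "w \<in> S - Z"
            show "lq e w"
            proof (rule ccontr)
              assume "\<not> lq e w"
              hence "w \<in> X" using e w by blast
              hence "lee A (Inl w) (Inr Z)" using O y Inr inX by blast
              thus False using w by simp
            qed
          qed (use e in auto)
          thus False using ns_nsat Z by blast
        qed
        thus ?thesis using Inr by simp
      qed
    qed
    have "Inl e \<in> CB" using e by simp
    moreover have "emult A (Inl e) (Inl e) = Inl e" using e by simp
    ultimately show ?thesis using l1 l2 by blast
  next
    case False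
    have XN: "X \<in> NS A" unfolding NS_def using XS cut False by blast
    have l1: "lee A x (Inr X)" if x: "x \<in> X'" for x
    proof (cases x)
      case (Inl a)
      have "a \<in> S" using x U Inl by blast
      thus ?thesis using x Inl unfolding X_def by simp
    next
      case (Inr Z)
      have Z: "Z \<in> NS A" using x U Inr by blast
      have "Z \<subseteq> X"
      proof
        fix a assume a: "a \<in> Z"
        show "a \<in> X"
        proof (rule ccontr)
          assume "a \<notin> X"
          hence "Inl a \<in> Y'" using inY ns_sub Z a by blast
          hence "lee A (Inr Z) (Inl a)" using O x Inr by blast
          thus False using a by simp
        qed
      qed
      thus ?thesis using Inr by simp
    qed
    have l2: "lee A (Inr X) y" if y: "y \<in> Y'" for y
    proof (cases y)
      case (Inl b) thus ?thesis using notX y by simp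
    next
      case (Inr Z)
      have "X \<subseteq> Z"
      proof
        fix a assume "a \<in> X"
        hence "lee A (Inl a) (Inr Z)" using O inX y Inr by blast
        thus "a \<in> Z" by simp
      qed
      thus ?thesis using Inr by simp
    qed
    have "emult A (Inr X) (Inr X) = Inr X" by simp
    thus ?thesis using XN l1 l2 by blast
  qed
qed

lemma ext_sat: "saturated_chain (ext A)"
  unfolding saturated_chain_def
proof (intro conjI allI impI)
  show "bl_chain (ext A)" by (rule ext_chain)
next
  fix X' Y' assume c: "bl_cut (ext A) X' Y'"
  have U: "X' \<union> Y' = CB" using c unfolding bl_cut_def by simp
  have O: "\<And>x y. x \<in> X' \<Longrightarrow> y \<in> Y' \<Longrightarrow> lee A x y"
  proof -
    fix x y assume "x \<in> X'" "y \<in> Y'"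
    moreover hence "x \<in> CB" "y \<in> CB" using U by blast+
    ultimately show "lee A x y" using c ble unfolding bl_cut_def by blast
  qed
  have M: "\<And>y1 y2. y1 \<in> Y' \<Longrightarrow> y2 \<in> Y' \<Longrightarrow> emult A y1 y2 \<in> Y'"
    using c unfolding bl_cut_def by simp
  have P: "\<And>x y. x \<in> X' \<Longrightarrow> y \<in> Y' \<Longrightarrow> emult A x y = x"
    using c unfolding bl_cut_def by simp
  obtain u where u: "u \<in> CB" "emult A u u = u" "\<forall>x\<in>X'. lee A x u" "\<forall>y\<in>Y'. lee A u y"
    using sat_core[OF U O M P] by blast
  show "saturated_cut (ext A) X' Y'"
    unfolding saturated_cut_def bl_idempotent_def
  proof (intro bexI[of _ u] conjI ballI)
    show "mult (ext A) u u = u" using u by simp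
  next
    fix x assume x: "x \<in> X'"
    hence xC: "x \<in> CB" using U by blast
    show "bl_le (ext A) x u" using ble[OF xC u(1)] u(3) x by simp
  next
    fix y assume y: "y \<in> Y'"
    hence yC: "y \<in> CB" using U by blast
    show "bl_le (ext A) u y" using ble[OF u(1) yC] u(4) y by simp
  next
    show "u \<in> carrier (ext A)" using u(1) by simp
  qed
qed


lemma ext_emb: "bl_embedding A (ext A) Inl"
  unfolding bl_embedding_def
  using meet_le meet_nle join_le join_nle by (auto simp: inj_on_def mS iS)

lemma ext_idem: "\<forall>b\<in>carrier (ext A) - Inl ` S. bl_idempotent (ext A) b"
  unfolding bl_idempotent_def by auto

lemma ext_inf: "C \<subseteq> S \<Longrightarrow> is_bl_inf A C m \<Longrightarrow> bl_idempotent A m \<Longrightarrow> is_bl_inf (ext A) (Inl ` C) (Inl m)"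
proof -
  assume C: "C \<subseteq> S" and inf: "is_bl_inf A C m" and idm: "bl_idempotent A m"
  have mS': "m \<in> S" using inf unfolding is_bl_inf_def by blast
  have lb: "\<forall>c\<in>C. lq m c" using inf unfolding is_bl_inf_def by blast
  have gr: "\<And>z. z \<in> S \<Longrightarrow> \<forall>c\<in>C. lq z c \<Longrightarrow> lq z m" using inf unfolding is_bl_inf_def by blast
  have G: "lee A z (Inl m)" if z: "z \<in> CB" and zc: "\<forall>c\<in>C. lee A z (Inl c)" for z
  proof (cases z)
    case (Inl a) thus ?thesis using gr[of a] z zc by simp
  next
    case (Inr X)
    have X: "X \<in> NS A" using z Inr by simp
    have cX: "c \<in> C \<Longrightarrow> c \<notin> X" for c using zc Inr by simp
    have "m \<notin> X"
    proof
      assume mX: "m \<in> X"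
      have "saturated_cut A X (S - X)" unfolding saturated_cut_def
      proof (intro bexI[of _ m] conjI ballI)
        fix x assume x: "x \<in> X"
        have "\<forall>c\<in>C. lq x c" using ns_le[OF X x] cX C by blast
        thus "lq x m" using gr ns_sub X x by blast
      next
        fix y assume "y \<in> S - X" thus "lq m y" using ns_le[OF X mX] by blast
      qed (use idm mS' in auto)
      thus False using ns_nsat X by blast
    qed
    thus ?thesis using Inr by simp
  qed
  show ?thesis unfolding is_bl_inf_def
  proof (intro conjI ballI impI)
    show "Inl m \<in> carrier (ext A)" using mS' by simp
  next
    fix c :: "'a + 'a set" assume "c \<in> Inl ` C"
    then obtain c0 where c0: "c0 \<in> C" "c = Inl c0" by blast
    have "c0 \<in> S" using c0 C by blast
    thus "bl_le (ext A) (Inl m) c" using ble[of "Inl m" "Inl c0"] mS' lb c0 by simp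
  next
    fix z assume z: "z \<in> carrier (ext A)" and zc: "\<forall>c\<in>Inl ` C. bl_le (ext A) z c"
    have zC: "z \<in> CB" using z by simp
    have "\<forall>c\<in>C. lee A z (Inl c)"
    proof
      fix c assume c: "c \<in> C"
      hence "c \<in> S" using C by blast
      thus "lee A z (Inl c)" using ble[OF zC, of "Inl c"] zc c by simp
    qed
    hence "lee A z (Inl m)" using G zC by blast
    thus "bl_le (ext A) z (Inl m)" using ble[OF zC, of "Inl m"] mS' by simp
  qed
qed

lemma ext_sup: "C \<subseteq> S \<Longrightarrow> is_bl_sup A C m \<Longrightarrow> bl_idempotent A m \<Longrightarrow> is_bl_sup (ext A) (Inl ` C) (Inl m)"
proof -
  assume C: "C \<subseteq> S" and sup: "is_bl_sup A C m" and idm: "bl_idempotent A m"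
  have mS': "m \<in> S" using sup unfolding is_bl_sup_def by blast
  have ub: "\<forall>c\<in>C. lq c m" using sup unfolding is_bl_sup_def by blast
  have le: "\<And>z. z \<in> S \<Longrightarrow> \<forall>c\<in>C. lq c z \<Longrightarrow> lq m z" using sup unfolding is_bl_sup_def by blast
  have G: "lee A (Inl m) z" if z: "z \<in> CB" and zc: "\<forall>c\<in>C. lee A (Inl c) z" for z
  proof (cases z)
    case (Inl a) thus ?thesis using le[of a] z zc by simp
  next
    case (Inr X)
    have X: "X \<in> NS A" using z Inr by simp
    have cX: "c \<in> C \<Longrightarrow> c \<in> X" for c using zc Inr by simp
    have "m \<in> X"
    proof (rule ccontr)
      assume mX: "m \<notin> X"
      have "saturated_cut A X (S - X)" unfolding saturated_cut_def
      proof (intro bexI[of _ m] conjI ballI)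
        fix x assume x: "x \<in> X" thus "lq x m" using ns_le[OF X x] mS' mX by blast
      next
        fix y assume y: "y \<in> S - X"
        have "\<forall>c\<in>C. lq c y" using ns_le[OF X] cX y by blast
        thus "lq m y" using le y by blast
      qed (use idm mS' in auto)
      thus False using ns_nsat X by blast
    qed
    thus ?thesis using Inr by simp
  qed
  show ?thesis unfolding is_bl_sup_def
  proof (intro conjI ballI impI)
    show "Inl m \<in> carrier (ext A)" using mS' by simp
  next
    fix c :: "'a + 'a set" assume "c \<in> Inl ` C"
    then obtain c0 where c0: "c0 \<in> C" "c = Inl c0" by blast
    have "c0 \<in> S" using c0 C by blast
    thus "bl_le (ext A) c (Inl m)" using ble[of "Inl c0" "Inl m"] mS' ub c0 by simp
  next
    fix z assume z: "z \<in> carrier (ext A)" and zc: "\<forall>c\<in>Inl ` C. bl_le (ext A) c z"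
    have zC: "z \<in> CB" using z by simp
    have "\<forall>c\<in>C. lee A (Inl c) z"
    proof
      fix c assume c: "c \<in> C"
      hence "c \<in> S" using C by blast
      thus "lee A (Inl c) z" using ble[OF _ zC, of "Inl c"] zc c by simp
    qed
    hence "lee A (Inl m) z" using G zC by blast
    thus "bl_le (ext A) (Inl m) z" using ble[OF _ zC, of "Inl m"] mS' by simp
  qed
qed

end

theorem mainTheorem9:
  fixes A :: "'a bl"
  assumes "bl_chain A"
  shows "\<exists>(B :: ('a + 'a set) bl) f.
           saturated_chain B \<and> bl_embedding A B f \<and>
           (\<forall>b\<in>carrier B - f ` carrier A. bl_idempotent B b) \<and>
           (\<forall>C m. C \<subseteq> carrier A \<longrightarrow> is_bl_inf A C m \<longrightarrow> bl_idempotent A m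
                 \<longrightarrow> is_bl_inf B (f ` C) (f m)) \<and>
           (\<forall>C m. C \<subseteq> carrier A \<longrightarrow> is_bl_sup A C m \<longrightarrow> bl_idempotent A m
                 \<longrightarrow> is_bl_sup B (f ` C) (f m))"
proof -
  interpret blc A using assms by unfold_locales
  show ?thesis
    apply (rule exI[of _ "ext A"], rule exI[of _ Inl])
    using ext_sat ext_emb ext_idem ext_inf ext_sup by blast
qed

end
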